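(* Let $G=(V,E)$ be a simple graph with $V=\{1,\dots,n\}$, adjacency matrix $A$, and let $w\in\mathbb{R}^n$ with $w\geq 0$. Then $$\alpha_w(G)=\max\{w^\top x \mid x \text{ solves } \mathrm{LCP}(A+I,-\mathbf{e})\},$$ where $I$ is the $n\times n$ identity matrix and $\mathbf{e}$ is the all-ones vector in $\mathbb{R}^n$.
   Context: A simple graph is a finite undirected graph without self-loops or multiple edges; its adjacency matrix $A=[a_{ij}]$ has $a_{ij}=1$ if $\{i,j\}\in E$ and $0$ otherwise. An independent set is a set of pairwise non-adjacent vertices. For a weight vector $w$, $\alpha_w(G):=\max\{\sum_{i\in S}w_i \mid S\subseteq V \text{ independent}\}$. For $M\in\mathbb{R}^{n\times n}$, $q\in\mathbb{R}^n$, a vector $x\in\mathbb{R}^n$ solves the linear complementarity problem $\mathrm{LCP}(M,q)$ if $x\geq 0$, $Mx+q\geq 0$ and $x^\top(Mx+q)=0$. *)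

theory Defs
  imports Main "HOL-Analysis.Analysis"
begin

text \<open>Vectors in R^n are functions nat => real, only their values on {1..n} matter;
  n x n matrices are functions nat => nat => real indexed on {1..n}.\<close>

definition simple_graph :: "nat \<Rightarrow> (nat \<Rightarrow> nat \<Rightarrow> bool) \<Rightarrow> bool" where
  "simple_graph n E \<longleftrightarrow>
     (\<forall>i j. E i j \<longrightarrow> i \<in> {1..n} \<and> j \<in> {1..n}) \<and>
     (\<forall>i j. E i j \<longrightarrow> E j i) \<and> (\<forall>i. \<not> E i i)"

definition adj_matrix :: "(nat \<Rightarrow> nat \<Rightarrow> bool) \<Rightarrow> nat \<Rightarrow> nat \<Rightarrow> real" where
  "adj_matrix E i j = (if E i j then 1 else 0)"

definition id_matrix :: "nat \<Rightarrow> nat \<Rightarrow> real" where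
  "id_matrix i j = (if i = j then 1 else 0)"

definition independent_set :: "nat \<Rightarrow> (nat \<Rightarrow> nat \<Rightarrow> bool) \<Rightarrow> nat set \<Rightarrow> bool" where
  "independent_set n E S \<longleftrightarrow> S \<subseteq> {1..n} \<and> (\<forall>i\<in>S. \<forall>j\<in>S. \<not> E i j)"

definition alpha_w :: "nat \<Rightarrow> (nat \<Rightarrow> nat \<Rightarrow> bool) \<Rightarrow> (nat \<Rightarrow> real) \<Rightarrow> real" where
  "alpha_w n E w = Max {(\<Sum>i\<in>S. w i) | S. independent_set n E S}"

definition mat_vec :: "nat \<Rightarrow> (nat \<Rightarrow> nat \<Rightarrow> real) \<Rightarrow> (nat \<Rightarrow> real) \<Rightarrow> nat \<Rightarrow> real" where
  "mat_vec n M x i = (\<Sum>j=1..n. M i j * x j)"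

definition solves_LCP :: "nat \<Rightarrow> (nat \<Rightarrow> nat \<Rightarrow> real) \<Rightarrow> (nat \<Rightarrow> real) \<Rightarrow> (nat \<Rightarrow> real) \<Rightarrow> bool" where
  "solves_LCP n M q x \<longleftrightarrow>
     (\<forall>i\<in>{1..n}. x i \<ge> 0) \<and>
     (\<forall>i\<in>{1..n}. mat_vec n M x i + q i \<ge> 0) \<and>
     (\<Sum>i=1..n. x i * (mat_vec n M x i + q i)) = 0"

end

theory Submission imports Defs begin

definition dd :: "(nat \<Rightarrow> nat \<Rightarrow> bool) \<Rightarrow> (nat \<Rightarrow> real) \<Rightarrow> nat set \<Rightarrow> nat \<Rightarrow> real" where
  "dd E x T i = (\<Sum>j\<in>T. if E i j \<or> j = i then x j else 0)"

definition ff :: "(nat \<Rightarrow> nat \<Rightarrow> bool) \<Rightarrow> (nat \<Rightarrow> real) \<Rightarrow> (nat \<Rightarrow> real) \<Rightarrow> nat set \<Rightarrow> real" where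
  "ff E x w T = (\<Sum>i\<in>T. w i * x i / dd E x T i)"

lemma dd_ge:
  assumes "finite T" "i \<in> T" "\<forall>j\<in>T. x j > 0"
  shows "dd E x T i \<ge> x i"
proof -
  have "(if E i i \<or> i = i then x i else 0) \<le> dd E x T i"
    unfolding dd_def using assms
    by (intro member_le_sum) auto
  thus ?thesis by simp
qed

lemma dd_mono:
  assumes "finite T" "U \<subseteq> T" "\<forall>j\<in>T. x j > 0"
  shows "dd E x U i \<le> dd E x T i"
  unfolding dd_def using assms
  by (intro sum_mono2) auto

lemma key_sum:
  assumes fin: "finite S" and pos: "\<forall>j\<in>S. x j > 0" and wpos: "\<forall>j\<in>S. w j \<ge> 0"
    and sym: "\<forall>i j. E i j \<longrightarrow> E j i"
  shows "(\<Sum>v\<in>S. x v * (w v + ff E x w (S - {j. E v j \<or> j = v}))) \<ge> (\<Sum>v\<in>S. x v) * ff E x w S"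
proof -
  define D where "D i = dd E x S i" for i
  have Dpos: "D i > 0" if "i \<in> S" for i using dd_ge[OF fin that pos, of E] pos that D_def by fastforce
  have step1: "x v * ff E x w (S - {j. E v j \<or> j = v})
      \<ge> (\<Sum>i\<in>S. if E v i \<or> i = v then 0 else x v * (w i * x i / D i))" if v: "v \<in> S" for v
  proof -
    let ?T = "S - {j. E v j \<or> j = v}"
    have "ff E x w ?T = (\<Sum>i\<in>S. if E v i \<or> i = v then 0 else w i * x i / dd E x ?T i)"
      unfolding ff_def using fin by (intro sum.mono_neutral_cong_left) auto
    also have "\<dots> \<ge> (\<Sum>i\<in>S. if E v i \<or> i = v then 0 else w i * x i / D i)"
    proof (intro sum_mono)
      fix i assume i: "i \<in> S"
      show "(if E v i \<or> i = v then 0 else w i * x i / D i) \<le> (if E v i \<or> i = v then 0 else w i * x i / dd E x ?T i)"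
      proof (cases "E v i \<or> i = v")
        case False
        have "i \<in> ?T" using False i by auto
        hence a: "dd E x ?T i \<ge> x i" using dd_ge[of ?T i x E] fin pos by auto
        have b: "dd E x ?T i \<le> D i" unfolding D_def using dd_mono[of S ?T x E i] fin pos by auto
        have c: "x i > 0" using pos i by auto
        have "w i * x i \<ge> 0" using wpos pos i by (simp add: less_imp_le)
        hence "w i * x i / D i \<le> w i * x i / dd E x ?T i"
          using a b c by (intro divide_left_mono) auto
        thus ?thesis using False by simp
      qed simp
    qed
    finally have "ff E x w ?T \<ge> (\<Sum>i\<in>S. if E v i \<or> i = v then 0 else w i * x i / D i)" .
    hence "x v * ff E x w ?T \<ge> x v * (\<Sum>i\<in>S. if E v i \<or> i = v then 0 else w i * x i / D i)"
      using pos v by (simp add: mult_left_mono less_imp_le)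
    thus ?thesis by (simp add: sum_distrib_left if_distrib cong: if_cong)
  qed
  have "(\<Sum>v\<in>S. x v * (w v + ff E x w (S - {j. E v j \<or> j = v})))
      = (\<Sum>v\<in>S. x v * w v) + (\<Sum>v\<in>S. x v * ff E x w (S - {j. E v j \<or> j = v}))"
    by (simp add: distrib_left sum.distrib)
  also have "\<dots> \<ge> (\<Sum>v\<in>S. x v * w v) + (\<Sum>v\<in>S. \<Sum>i\<in>S. if E v i \<or> i = v then 0 else x v * (w i * x i / D i))"
    using step1 by (intro add_left_mono sum_mono) auto
  finally have A: "(\<Sum>v\<in>S. x v * (w v + ff E x w (S - {j. E v j \<or> j = v})))
      \<ge> (\<Sum>v\<in>S. x v * w v) + (\<Sum>i\<in>S. \<Sum>v\<in>S. if E v i \<or> i = v then 0 else x v * (w i * x i / D i))"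
    using sum.swap[of "\<lambda>v i. if E v i \<or> i = v then 0 else x v * (w i * x i / D i)" S S] by simp
  have B: "(\<Sum>v\<in>S. if E v i \<or> i = v then 0 else x v * (w i * x i / D i)) = ((\<Sum>v\<in>S. x v) - D i) * (w i * x i / D i)"
    if i: "i \<in> S" for i
  proof -
    have "(\<Sum>v\<in>S. if E v i \<or> i = v then 0 else x v * (w i * x i / D i))
        = (\<Sum>v\<in>S. (x v - (if E i v \<or> v = i then x v else 0)) * (w i * x i / D i))"
      using sym by (intro sum.cong) auto
    also have "\<dots> = ((\<Sum>v\<in>S. x v) - D i) * (w i * x i / D i)"
      by (simp only: sum_distrib_right[symmetric] sum_subtractf D_def dd_def)
    finally show ?thesis .
  qed
  have C: "(\<Sum>v\<in>S. x v) * ff E x w S = (\<Sum>i\<in>S. x i * w i) + (\<Sum>i\<in>S. ((\<Sum>v\<in>S. x v) - D i) * (w i * x i / D i))"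
  proof -
    have "(\<Sum>v\<in>S. x v) * ff E x w S = (\<Sum>i\<in>S. (\<Sum>v\<in>S. x v) * (w i * x i / D i))"
      unfolding ff_def D_def by (simp add: sum_distrib_left)
    also have "\<dots> = (\<Sum>i\<in>S. x i * w i + ((\<Sum>v\<in>S. x v) - D i) * (w i * x i / D i))"
    proof (intro sum.cong refl)
      fix i assume "i \<in> S"
      hence "D i > 0" by (rule Dpos)
      thus "(\<Sum>v\<in>S. x v) * (w i * x i / D i) = x i * w i + ((\<Sum>v\<in>S. x v) - D i) * (w i * x i / D i)"
        by (simp add: field_simps)
    qed
    finally show ?thesis by (simp add: sum.distrib)
  qed
  show ?thesis using A B C by simp
qed

lemma caro_wei:
  assumes sym: "\<forall>i j. E i j \<longrightarrow> E j i" and irr: "\<forall>i. \<not> E i i"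
  shows "finite S \<Longrightarrow> \<forall>j\<in>S. x j > 0 \<Longrightarrow> \<forall>j\<in>S. w j \<ge> 0 \<Longrightarrow>
    \<exists>I\<subseteq>S. (\<forall>i\<in>I. \<forall>j\<in>I. \<not> E i j) \<and> ff E x w S \<le> (\<Sum>i\<in>I. w i)"
proof (induction "card S" arbitrary: S rule: less_induct)
  case less
  show ?case
  proof (cases "S = {}")
    case True thus ?thesis by (simp add: ff_def)
  next
    case False
    have xs: "(\<Sum>v\<in>S. x v) > 0" using less.prems False by (intro sum_pos) auto
    let ?g = "\<lambda>v. w v + ff E x w (S - {j. E v j \<or> j = v})"
    have "\<exists>v\<in>S. ?g v \<ge> ff E x w S"
    proof (rule ccontr)
      assume "\<not> ?thesis"
      hence lt: "\<forall>v\<in>S. ?g v < ff E x w S" by auto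
      have "(\<Sum>v\<in>S. x v * ?g v) < (\<Sum>v\<in>S. x v * ff E x w S)"
        using less.prems False lt by (intro sum_strict_mono) (auto intro: mult_strict_left_mono)
      also have "\<dots> = (\<Sum>v\<in>S. x v) * ff E x w S" by (simp add: sum_distrib_right)
      finally show False using key_sum[OF less.prems(1,2,3) sym] by linarith
    qed
    then obtain v where v: "v \<in> S" "?g v \<ge> ff E x w S" by blast
    let ?T = "S - {j. E v j \<or> j = v}"
    have "card ?T < card S" using v less.prems by (intro psubset_card_mono) auto
    then obtain I' where I': "I' \<subseteq> ?T" "\<forall>i\<in>I'. \<forall>j\<in>I'. \<not> E i j" "ff E x w ?T \<le> (\<Sum>i\<in>I'. w i)"
      using less.hyps[of ?T] less.prems by auto
    have fin: "finite I'" using I'(1) less.prems(1) finite_subset by blast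
    have vn: "v \<notin> I'" using I'(1) by auto
    have "\<forall>i\<in>insert v I'. \<forall>j\<in>insert v I'. \<not> E i j"
      using I' irr sym by blast
    moreover have "(\<Sum>i\<in>insert v I'. w i) = w v + (\<Sum>i\<in>I'. w i)" using fin vn by simp
    moreover have "insert v I' \<subseteq> S" using v I' by auto
    ultimately show ?thesis using v I'(3) by (intro exI[of _ "insert v I'"]) auto
  qed
qed

lemma mv_eq:
  assumes irr: "\<forall>i. \<not> E i i"
  shows "mat_vec n (\<lambda>i j. adj_matrix E i j + id_matrix i j) x i = (\<Sum>j\<in>{1..n}. if E i j \<or> j = i then x j else 0)"
  unfolding mat_vec_def adj_matrix_def id_matrix_def using irr by (intro sum.cong) auto

lemma alpha_facts:
  shows "finite {(\<Sum>i\<in>S. w i) | S. independent_set n E S}"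
    and "independent_set n E S \<Longrightarrow> (\<Sum>i\<in>S. w i) \<le> alpha_w n E w"
    and "\<exists>S. independent_set n E S \<and> (\<Sum>i\<in>S. w i) = alpha_w n E w"
proof -
  have sub: "{(\<Sum>i\<in>S. w i) | S. independent_set n E S} \<subseteq> (\<lambda>S. \<Sum>i\<in>S. w i) ` Pow {1..n}"
    unfolding independent_set_def by auto
  show fin: "finite {(\<Sum>i\<in>S. w i) | S. independent_set n E S}"
    using finite_subset[OF sub] by auto
  show "independent_set n E S \<Longrightarrow> (\<Sum>i\<in>S. w i) \<le> alpha_w n E w"
    unfolding alpha_w_def using fin by (intro Max_ge) auto
  have ne: "{(\<Sum>i\<in>S. w i) | S. independent_set n E S} \<noteq> {}"
    using independent_set_def[of n E "{}"] by auto
  show "\<exists>S. independent_set n E S \<and> (\<Sum>i\<in>S. w i) = alpha_w n E w"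
    using Max_in[OF fin ne] unfolding alpha_w_def by auto
qed

theorem theorem1:
  fixes n :: nat and E :: "nat \<Rightarrow> nat \<Rightarrow> bool" and w :: "nat \<Rightarrow> real"
  assumes "simple_graph n E"
    and "\<forall>i\<in>{1..n}. w i \<ge> 0"
  shows "(\<exists>x. solves_LCP n (\<lambda>i j. adj_matrix E i j + id_matrix i j) (\<lambda>i. - 1) x
              \<and> (\<Sum>i=1..n. w i * x i) = alpha_w n E w)
       \<and> (\<forall>x. solves_LCP n (\<lambda>i j. adj_matrix E i j + id_matrix i j) (\<lambda>i. - 1) x
              \<longrightarrow> (\<Sum>i=1..n. w i * x i) \<le> alpha_w n E w)"
proof
  have inV: "\<And>i j. E i j \<Longrightarrow> i \<in> {1..n} \<and> j \<in> {1..n}" and sym: "\<forall>i j. E i j \<longrightarrow> E j i"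
    and irr: "\<forall>i. \<not> E i i" using assms(1) unfolding simple_graph_def by auto
  let ?M = "\<lambda>i j. adj_matrix E i j + id_matrix i j"
  show "\<exists>x. solves_LCP n ?M (\<lambda>i. - 1) x \<and> (\<Sum>i=1..n. w i * x i) = alpha_w n E w"
  proof -
    obtain S0 where S0: "independent_set n E S0" "(\<Sum>i\<in>S0. w i) = alpha_w n E w"
      using alpha_facts(3) by blast
    define F where "F = {I. independent_set n E I \<and> S0 \<subseteq> I}"
    have Ffin: "finite (card ` F)" unfolding F_def independent_set_def
      by (rule finite_subset[of _ "card ` Pow {1..n}"]) auto
    have Fne: "card ` F \<noteq> {}" using S0 unfolding F_def by auto
    obtain I where I: "I \<in> F" "card I = Max (card ` F)" using Max_in[OF Ffin Fne] by auto
    have Imax: "\<forall>J\<in>F. card J \<le> card I" using I Ffin by auto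
    have Iind: "independent_set n E I" and S0I: "S0 \<subseteq> I" using I unfolding F_def by auto
    have Isub: "I \<subseteq> {1..n}" and Ie: "\<forall>i\<in>I. \<forall>j\<in>I. \<not> E i j" using Iind unfolding independent_set_def by auto
    have Ifin: "finite I" using Isub finite_subset by blast
    have maxl: "\<exists>j\<in>I. E i j" if "i \<in> {1..n}" "i \<notin> I" for i
    proof (rule ccontr)
      assume nn: "\<not> ?thesis"
      have "independent_set n E (insert i I)" unfolding independent_set_def
        using Isub Ie that nn sym irr by blast
      hence "insert i I \<in> F" using S0I unfolding F_def by auto
      hence "card (insert i I) \<le> card I" using Imax by auto
      thus False using Ifin that by simp
    qed
    define x where "x i = (if i \<in> I then 1 else (0::real))" for i
    have mv: "mat_vec n ?M x i = (\<Sum>j\<in>{1..n}. if E i j \<or> j = i then x j else 0)" for i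
      using mv_eq[of E, OF irr] by blast
    have mvI: "mat_vec n ?M x i = 1" if "i \<in> I" for i
    proof -
      have "mat_vec n ?M x i = (\<Sum>j\<in>{1..n}. if j = i then 1 else 0)"
        unfolding mv using that Ie by (intro sum.cong) (auto simp: x_def)
      also have "\<dots> = 1" using that Isub by auto
      finally show ?thesis .
    qed
    have mvN: "mat_vec n ?M x i \<ge> 1" if iN: "i \<in> {1..n}" "i \<notin> I" for i
    proof -
      obtain j where j: "j \<in> I" "E i j" using maxl[OF iN] by blast
      have "(if E i j \<or> j = i then x j else 0) \<le> (\<Sum>j\<in>{1..n}. if E i j \<or> j = i then x j else 0)"
        using j Isub by (intro member_le_sum) (auto simp: x_def)
      thus ?thesis unfolding mv using j by (simp add: x_def)
    qed
    have sol: "solves_LCP n ?M (\<lambda>i. - 1) x"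
      unfolding solves_LCP_def
    proof (intro conjI ballI)
      fix i assume "i \<in> {1..n}" thus "x i \<ge> 0" by (simp add: x_def)
    next
      fix i assume "i \<in> {1..n}" thus "mat_vec n ?M x i + - 1 \<ge> 0"
        using mvI mvN by (cases "i \<in> I") force+
    next
      show "(\<Sum>i=1..n. x i * (mat_vec n ?M x i + - 1)) = 0"
        using mvI by (intro sum.neutral) (auto simp: x_def)
    qed
    have "(\<Sum>i=1..n. w i * x i) = (\<Sum>i\<in>I. w i)"
    proof -
      have "(\<Sum>i=1..n. w i * x i) = (\<Sum>i\<in>{1..n}. if i \<in> I then w i else 0)"
        by (intro sum.cong) (auto simp: x_def)
      also have "\<dots> = (\<Sum>i\<in>I. w i)" using Isub by (simp add: sum.If_cases Int_absorb1)
      finally show ?thesis .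
    qed
    moreover have "(\<Sum>i\<in>I. w i) \<ge> (\<Sum>i\<in>S0. w i)"
      using S0I Isub assms(2) Ifin by (intro sum_mono2) auto
    moreover have "(\<Sum>i\<in>I. w i) \<le> alpha_w n E w" using alpha_facts(2)[OF Iind] .
    ultimately show ?thesis using sol S0(2) by (intro exI[of _ x]) auto
  qed
next
  have inV: "\<And>i j. E i j \<Longrightarrow> i \<in> {1..n} \<and> j \<in> {1..n}" and sym: "\<forall>i j. E i j \<longrightarrow> E j i"
    and irr: "\<forall>i. \<not> E i i" using assms(1) unfolding simple_graph_def by auto
  let ?M = "\<lambda>i j. adj_matrix E i j + id_matrix i j"
  show "\<forall>x. solves_LCP n ?M (\<lambda>i. - 1) x \<longrightarrow> (\<Sum>i=1..n. w i * x i) \<le> alpha_w n E w"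
  proof (intro allI impI)
    fix x assume sol: "solves_LCP n ?M (\<lambda>i. - 1) x"
    have xn: "\<forall>i\<in>{1..n}. x i \<ge> 0" and yn: "\<forall>i\<in>{1..n}. mat_vec n ?M x i + - 1 \<ge> 0"
      and cp: "(\<Sum>i=1..n. x i * (mat_vec n ?M x i + - 1)) = 0"
      using sol unfolding solves_LCP_def by auto
    have each: "\<forall>i\<in>{1..n}. x i * (mat_vec n ?M x i + - 1) = 0"
      using cp xn yn by (subst sum_nonneg_eq_0_iff[symmetric]) auto
    define S where "S = {i\<in>{1..n}. x i > 0}"
    have Ssub: "S \<subseteq> {1..n}" and Sfin: "finite S" unfolding S_def by auto
    have Spos: "\<forall>j\<in>S. x j > 0" unfolding S_def by auto
    have dd1: "dd E x S i = 1" if "i \<in> S" for i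
    proof -
      have "mat_vec n ?M x i = 1" using each that unfolding S_def by force
      moreover have "dd E x S i = (\<Sum>j\<in>{1..n}. if E i j \<or> j = i then x j else 0)"
        unfolding dd_def
      proof (rule sum.mono_neutral_left)
        show "\<forall>j\<in>{1..n} - S. (if E i j \<or> j = i then x j else 0) = 0"
          using xn unfolding S_def by (metis (no_types, lifting) DiffE antisym_conv2 mem_Collect_eq)
      qed (use Ssub in auto)
      ultimately show ?thesis using mv_eq[of E, OF irr] by metis
    qed
    have "ff E x w S = (\<Sum>i\<in>S. w i * x i)" unfolding ff_def using dd1 by simp
    also have "\<dots> = (\<Sum>i=1..n. w i * x i)"
    proof (rule sum.mono_neutral_left)
      show "\<forall>i\<in>{1..n} - S. w i * x i = 0" using xn unfolding S_def by force
    qed (use Ssub in auto)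
    finally have ffeq: "ff E x w S = (\<Sum>i=1..n. w i * x i)" .
    obtain I where I: "I \<subseteq> S" "\<forall>i\<in>I. \<forall>j\<in>I. \<not> E i j" "ff E x w S \<le> (\<Sum>i\<in>I. w i)"
      using caro_wei[OF sym irr Sfin Spos, of w] assms(2) Ssub by blast
    have "independent_set n E I" unfolding independent_set_def using I Ssub by auto
    thus "(\<Sum>i=1..n. w i * x i) \<le> alpha_w n E w" using alpha_facts(2)[of n E I w] I(3) ffeq by linarith
  qed
qed

end
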